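(* Let $\Omega\subset\mathbb{R}^2$ be open, $\lambda>0$, and let $u\in L^2(\Omega)$ satisfy $-\Delta u=\lambda u$ in $\Omega$. Let $\mathbf{x}_0\in\Omega$, $h>0$, and let $\mathbf{e}^-,\mathbf{e}^+$ be unit vectors with angle $\alpha\pi$ from $\mathbf{e}^-$ to $\mathbf{e}^+$, where $\alpha\in(0,2)$ is irrational; put $\Gamma^\pm=\{\mathbf{x}_0+t\mathbf{e}^\pm:0\le t\le h\}\subset\Omega$. Suppose $\Gamma^+$ is a singular line of $u$ ($\partial_\nu u=0$ on $\Gamma^+$) and $\Gamma^-$ is a generalized singular line of $u$ with constant parameter $\eta_1\equiv C_1$. Then $\mathrm{Vani}(u;\mathbf{x}_0)=0$ if $u(\mathbf{x}_0)\neq0$, and $\mathrm{Vani}(u;\mathbf{x}_0)=+\infty$ if $u(\mathbf{x}_0)=0$.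
   Context: No boundary condition is imposed on $\partial\Omega$; $u$ is real-analytic in $\Omega$. $\nu$ denotes a unit normal to the segment in question. A generalized singular line with parameter $\eta$ (not identically zero; here a nonzero complex constant) is a segment on which $\partial_\nu u+\eta u=0$. $\mathrm{Vani}(u;\mathbf{x}_0)$ is the smallest degree of a nonzero homogeneous term in the Taylor expansion of $u$ at $\mathbf{x}_0$ ($+\infty$ if all vanish). *)

theory Defs
  imports "HOL-Analysis.Analysis" "HOL-Library.Extended_Nat"
begin

definition pd1 :: "(real \<times> real \<Rightarrow> complex) \<Rightarrow> real \<times> real \<Rightarrow> complex" where
  "pd1 f x = vector_derivative (\<lambda>t. f (t, snd x)) (at (fst x))"

definition pd2 :: "(real \<times> real \<Rightarrow> complex) \<Rightarrow> real \<times> real \<Rightarrow> complex" where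
  "pd2 f x = vector_derivative (\<lambda>t. f (fst x, t)) (at (snd x))"

definition pdm :: "nat \<Rightarrow> nat \<Rightarrow> (real \<times> real \<Rightarrow> complex) \<Rightarrow> real \<times> real \<Rightarrow> complex" where
  "pdm j k f = (pd1 ^^ j) ((pd2 ^^ k) f)"

definition smooth_on :: "(real \<times> real) set \<Rightarrow> (real \<times> real \<Rightarrow> complex) \<Rightarrow> bool" where
  "smooth_on S f \<longleftrightarrow> (\<forall>j k. pdm j k f differentiable_on S)"

definition real_analytic_on :: "(real \<times> real) set \<Rightarrow> (real \<times> real \<Rightarrow> complex) \<Rightarrow> bool" where
  "real_analytic_on S f \<longleftrightarrow> smooth_on S f \<and>
     (\<forall>x\<in>S. \<exists>r>0. \<forall>y\<in>ball x r.
        (\<lambda>N. \<Sum>j\<le>N. pdm j (N - j) f x / of_nat (fact j * fact (N - j))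
               * of_real ((fst y - fst x) ^ j * (snd y - snd x) ^ (N - j))) sums f y)"

text \<open>Homogeneous Taylor term of degree N of f at x0 is nonzero (as a polynomial),
  i.e. some of its coefficients is nonzero.\<close>
definition hom_term_nonzero :: "(real \<times> real \<Rightarrow> complex) \<Rightarrow> real \<times> real \<Rightarrow> nat \<Rightarrow> bool" where
  "hom_term_nonzero f x0 N \<longleftrightarrow> (\<exists>j\<le>N. pdm j (N - j) f x0 / of_nat (fact j * fact (N - j)) \<noteq> 0)"

definition Vani :: "(real \<times> real \<Rightarrow> complex) \<Rightarrow> real \<times> real \<Rightarrow> enat" where
  "Vani f x0 = (if \<exists>N. hom_term_nonzero f x0 N
                then enat (LEAST N. hom_term_nonzero f x0 N) else \<infinity>)"

definition laplacian :: "(real \<times> real \<Rightarrow> complex) \<Rightarrow> real \<times> real \<Rightarrow> complex" where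
  "laplacian f x = pd1 (pd1 f) x + pd2 (pd2 f) x"

definition dir_deriv :: "(real \<times> real \<Rightarrow> complex) \<Rightarrow> real \<times> real \<Rightarrow> real \<times> real \<Rightarrow> complex" where
  "dir_deriv f v x = of_real (fst v) * pd1 f x + of_real (snd v) * pd2 f x"

definition unitv :: "real \<Rightarrow> real \<times> real" where
  "unitv \<theta> = (cos \<theta>, sin \<theta>)"

definition normalv :: "real \<Rightarrow> real \<times> real" where
  "normalv \<theta> = (- sin \<theta>, cos \<theta>)"

definition segment_pt :: "real \<times> real \<Rightarrow> real \<Rightarrow> real \<Rightarrow> real \<times> real" where
  "segment_pt x0 \<theta> t = x0 + t *\<^sub>R unitv \<theta>"

end

theory Submission
  imports Defs
begin


lemma pd1_D:
  assumes D: "(f has_derivative D) (at y)"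
  shows "((\<lambda>t. f (t, snd y)) has_vector_derivative D (1,0)) (at (fst y))" "pd1 f y = D (1,0)"
proof -
  have l: "linear D" using D has_derivative_linear by blast
  have "((\<lambda>t. (t, snd y)) has_derivative (\<lambda>h. (h, 0))) (at (fst y))"
    by (auto intro!: derivative_eq_intros)
  moreover have D': "(f has_derivative D) (at (fst y, snd y))" using D by simp
  ultimately have "((f \<circ> (\<lambda>t. (t, snd y))) has_derivative (D \<circ> (\<lambda>h. (h,0)))) (at (fst y))"
    by (rule diff_chain_at)
  moreover have "(D \<circ> (\<lambda>h. (h,0))) = (\<lambda>h. h *\<^sub>R D (1,0))"
  proof
    fix h :: real
    have "(h, 0::real) = h *\<^sub>R (1,0)" by simp
    then show "(D \<circ> (\<lambda>h. (h,0))) h = h *\<^sub>R D (1,0)"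
      using linear_scale[OF l] by (metis comp_apply)
  qed
  ultimately show hvd: "((\<lambda>t. f (t, snd y)) has_vector_derivative D (1,0)) (at (fst y))"
    by (simp add: has_vector_derivative_def o_def)
  then show "pd1 f y = D (1,0)" unfolding pd1_def by (rule vector_derivative_at)
qed

lemma pd2_D:
  assumes D: "(f has_derivative D) (at y)"
  shows "((\<lambda>t. f (fst y, t)) has_vector_derivative D (0,1)) (at (snd y))" "pd2 f y = D (0,1)"
proof -
  have l: "linear D" using D has_derivative_linear by blast
  have "((\<lambda>t. (fst y, t)) has_derivative (\<lambda>h. (0, h))) (at (snd y))"
    by (auto intro!: derivative_eq_intros)
  moreover have D': "(f has_derivative D) (at (fst y, snd y))" using D by simp
  ultimately have "((f \<circ> (\<lambda>t. (fst y, t))) has_derivative (D \<circ> (\<lambda>h. (0,h)))) (at (snd y))"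
    by (rule diff_chain_at)
  moreover have "(D \<circ> (\<lambda>h. (0,h))) = (\<lambda>h. h *\<^sub>R D (0,1))"
  proof
    fix h :: real
    have "(0::real, h) = h *\<^sub>R (0,1)" by simp
    then show "(D \<circ> (\<lambda>h. (0,h))) h = h *\<^sub>R D (0,1)"
      using linear_scale[OF l] by (metis comp_apply)
  qed
  ultimately show hvd: "((\<lambda>t. f (fst y, t)) has_vector_derivative D (0,1)) (at (snd y))"
    by (simp add: has_vector_derivative_def o_def)
  then show "pd2 f y = D (0,1)" unfolding pd2_def by (rule vector_derivative_at)
qed

lemma pd1_hvd:
  assumes "f differentiable (at y)"
  shows "((\<lambda>t. f (t, snd y)) has_vector_derivative pd1 f y) (at (fst y))"
  using assms pd1_D unfolding differentiable_def by metis

lemma pd2_hvd: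
  assumes "f differentiable (at y)"
  shows "((\<lambda>t. f (fst y, t)) has_vector_derivative pd2 f y) (at (snd y))"
  using assms pd2_D unfolding differentiable_def by metis

definition De :: "real \<times> real \<Rightarrow> (real \<times> real \<Rightarrow> complex) \<Rightarrow> real \<times> real \<Rightarrow> complex" where
  "De e f y = of_real (fst e) * pd1 f y + of_real (snd e) * pd2 f y"

lemma line_hvd:
  assumes "f differentiable (at (x0 + t *\<^sub>R e))"
  shows "((\<lambda>s. f (x0 + s *\<^sub>R e)) has_vector_derivative De e f (x0 + t *\<^sub>R e)) (at t)"
proof -
  obtain D where D: "(f has_derivative D) (at (x0 + t *\<^sub>R e))" using assms differentiable_def by blast
  have l: "linear D" using D has_derivative_linear by blast
  have "((\<lambda>s. x0 + s *\<^sub>R e) has_derivative (\<lambda>h. h *\<^sub>R e)) (at t)"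
    by (auto intro!: derivative_eq_intros)
  from diff_chain_at[OF this D]
  have "((f \<circ> (\<lambda>s. x0 + s *\<^sub>R e)) has_derivative (D \<circ> (\<lambda>h. h *\<^sub>R e))) (at t)" .
  moreover have "(D \<circ> (\<lambda>h. h *\<^sub>R e)) = (\<lambda>h. h *\<^sub>R D e)"
    using linear_scale[OF l] by (auto simp: o_def)
  ultimately have hvd: "((\<lambda>s. f (x0 + s *\<^sub>R e)) has_vector_derivative D e) (at t)"
    by (simp add: has_vector_derivative_def o_def)
  have e: "e = fst e *\<^sub>R (1,0) + snd e *\<^sub>R (0,1)" by (simp add: prod_eq_iff)
  have "D (fst e *\<^sub>R (1,0) + snd e *\<^sub>R (0,1)) = fst e *\<^sub>R D (1,0) + snd e *\<^sub>R D (0,1)"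
    by (simp only: linear_add[OF l] linear_scale[OF l])
  then have "D e = fst e *\<^sub>R D (1,0) + snd e *\<^sub>R D (0,1)" using e by metis
  also have "\<dots> = De e f (x0 + t *\<^sub>R e)"
    using pd1_D(2)[OF D] pd2_D(2)[OF D] by (simp add: De_def scaleR_conv_of_real)
  finally show ?thesis using hvd by simp
qed

lemma open_slice1: "open (S::(real\<times>real) set) \<Longrightarrow> open {t. (t, c) \<in> S}"
proof -
  assume "open S"
  then have "open ((\<lambda>t::real. (t, c::real)) -` S)"
    by (intro open_vimage) (auto intro!: continuous_intros)
  then show ?thesis by (simp add: vimage_def)
qed

lemma open_slice2: "open (S::(real\<times>real) set) \<Longrightarrow> open {t. (c, t) \<in> S}"
proof -
  assume "open S"
  then have "open ((\<lambda>t::real. (c::real, t)) -` S)"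
    by (intro open_vimage) (auto intro!: continuous_intros)
  then show ?thesis by (simp add: vimage_def)
qed

lemma pd1_local:
  assumes "open S" "\<forall>y\<in>S. f y = g y" "x \<in> S"
  shows "pd1 f x = pd1 g x"
proof -
  have "open {t. (t, snd x) \<in> S}" "fst x \<in> {t. (t, snd x) \<in> S}"
    using open_slice1 assms by auto
  then have "eventually (\<lambda>t. t \<in> UNIV \<longrightarrow> f (t, snd x) = g (t, snd x)) (nhds (fst x))"
    unfolding eventually_nhds using assms(2) by blast
  then show ?thesis unfolding pd1_def
    by (intro vector_derivative_cong_eq) auto
qed

lemma pd2_local:
  assumes "open S" "\<forall>y\<in>S. f y = g y" "x \<in> S"
  shows "pd2 f x = pd2 g x"
proof -
  have "open {t. (fst x, t) \<in> S}" "snd x \<in> {t. (fst x, t) \<in> S}"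
    using open_slice2 assms by auto
  then have "eventually (\<lambda>t. t \<in> UNIV \<longrightarrow> f (fst x, t) = g (fst x, t)) (nhds (snd x))"
    unfolding eventually_nhds using assms(2) by blast
  then show ?thesis unfolding pd2_def
    by (intro vector_derivative_cong_eq) auto
qed

lemma pd1_pow_local:
  assumes "open S" "\<forall>y\<in>S. f y = g y"
  shows "\<forall>y\<in>S. (pd1 ^^ n) f y = (pd1 ^^ n) g y"
  using assms by (induction n) (auto intro: pd1_local)

lemma pd2_pow_local:
  assumes "open S" "\<forall>y\<in>S. f y = g y"
  shows "\<forall>y\<in>S. (pd2 ^^ n) f y = (pd2 ^^ n) g y"
  using assms by (induction n) (auto intro: pd2_local)

lemma pdm_local:
  assumes "open S" "\<forall>y\<in>S. f y = g y"
  shows "\<forall>y\<in>S. pdm i j f y = pdm i j g y"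
  unfolding pdm_def
  by (rule pd1_pow_local[OF assms(1)]) (rule pd2_pow_local[OF assms])

lemma pd1_add:
  assumes "f differentiable (at y)" "g differentiable (at y)"
  shows "pd1 (\<lambda>x. f x + g x) y = pd1 f y + pd1 g y"
  unfolding pd1_def[of "\<lambda>x. f x + g x"]
  by (intro vector_derivative_at has_vector_derivative_add pd1_hvd assms)

lemma pd2_add:
  assumes "f differentiable (at y)" "g differentiable (at y)"
  shows "pd2 (\<lambda>x. f x + g x) y = pd2 f y + pd2 g y"
  unfolding pd2_def[of "\<lambda>x. f x + g x"]
  by (intro vector_derivative_at has_vector_derivative_add pd2_hvd assms)

lemma pd1_cmult:
  assumes "f differentiable (at y)"
  shows "pd1 (\<lambda>x. c * f x) y = c * pd1 f y"
  unfolding pd1_def[of "\<lambda>x. c * f x"]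
  by (intro vector_derivative_at has_vector_derivative_mult_right pd1_hvd assms)

lemma pd2_cmult:
  assumes "f differentiable (at y)"
  shows "pd2 (\<lambda>x. c * f x) y = c * pd2 f y"
  unfolding pd2_def[of "\<lambda>x. c * f x"]
  by (intro vector_derivative_at has_vector_derivative_mult_right pd2_hvd assms)

lemma pdm_Suc1: "pdm (Suc i) j f = pd1 (pdm i j f)"
  by (simp add: pdm_def)

lemma pdm_0: "pdm 0 j f = (pd2 ^^ j) f"
  by (simp add: pdm_def)

lemma pdm_00: "pdm 0 0 f = f"
  by (simp add: pdm_def)

lemma pdm_0Suc: "pdm 0 (Suc j) f = pd2 (pdm 0 j f)"
  by (simp add: pdm_def)

lemma pair_dist_le:
  fixes a b c d :: real
  shows "dist (a, b) (c, d) \<le> \<bar>a - c\<bar> + \<bar>b - d\<bar>"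
proof -
  have "dist (a, b) (c, d) = norm (a - c, b - d)" by (simp add: dist_norm)
  also have "\<dots> \<le> norm (a - c) + norm (b - d)" by (rule norm_Pair_le)
  finally show ?thesis by simp
qed

lemma seg_le:
  fixes a s \<sigma> :: real
  assumes "\<sigma> \<in> closed_segment a (a + s)"
  shows "\<bar>\<sigma> - a\<bar> \<le> \<bar>s\<bar>"
  using dist_in_closed_segment[OF assms] by (simp add: dist_real_def)

lemma tri: "norm (x - z) \<le> norm (x - y) + norm (y - (z::'a::real_normed_vector))"
  using norm_triangle_ineq[of "x - y" "y - z"] by simp

lemma tri3: "norm (- x + y + z) \<le> norm x + norm y + norm (z::'a::real_normed_vector)"
proof -
  have "norm (- x + y + z) \<le> norm (- x + y) + norm z" by (rule norm_triangle_ineq)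
  also have "norm (- x + y) \<le> norm x + norm y" using norm_triangle_ineq[of "-x" y] by simp
  finally show ?thesis by simp
qed

lemma schwarz:
  fixes G H :: "real \<times> real \<Rightarrow> complex"
  assumes S: "open S" and x: "x \<in> S"
    and dG: "\<forall>y\<in>S. G differentiable (at y)"
    and dH: "\<forall>y\<in>S. ((\<lambda>s. pd2 G (s, snd y)) has_vector_derivative H y) (at (fst y))"
    and cH: "continuous_on S H"
  shows "((\<lambda>t. pd1 G (fst x, t)) has_vector_derivative H x) (at (snd x))"
proof -
  obtain a b where xab: "x = (a, b)" by (cases x)
  have main: "\<exists>d>0. \<forall>y. norm (y - b) < d \<longrightarrow>
      norm (pd1 G (a, y) - pd1 G (a, b) - (y - b) *\<^sub>R H x) \<le> e * norm (y - b)" if e: "e > 0" for e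
  proof -
    define \<epsilon> where "\<epsilon> = e / 9"
    have \<epsilon>: "\<epsilon> > 0" using e by (simp add: \<epsilon>_def)
    obtain r where r: "r > 0" "ball x r \<subseteq> S" using S x open_contains_ball by blast
    obtain r2 where r2: "r2 > 0" "\<forall>y\<in>S. dist y x < r2 \<longrightarrow> dist (H y) (H x) < \<epsilon>"
      using cH x \<epsilon> unfolding continuous_on_iff by blast
    define d where "d = min r r2 / 2"
    have d: "d > 0" using r r2 by (simp add: d_def)
    have inR: "(\<sigma>, \<tau>) \<in> S \<and> norm (H (\<sigma>, \<tau>) - H x) < \<epsilon>"
      if "\<bar>\<sigma> - a\<bar> < d" "\<bar>\<tau> - b\<bar> < d" for \<sigma> \<tau>
    proof -
      have "dist (\<sigma>, \<tau>) (a, b) < min r r2"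
        using pair_dist_le[of \<sigma> \<tau> a b] that by (simp add: d_def)
      then have "(\<sigma>, \<tau>) \<in> S" "dist (\<sigma>, \<tau>) x < r2"
        using r(2) xab by (auto simp: dist_commute)
      then show ?thesis using r2 by (auto simp: dist_norm)
    qed
    have stepA: "norm (pd2 G (a + s, \<tau>) - pd2 G (a, \<tau>) - s *\<^sub>R H x) \<le> 3 * \<epsilon> * \<bar>s\<bar>"
      if hs: "\<bar>s\<bar> < d" and ht: "\<bar>\<tau> - b\<bar> < d" for s \<tau>
    proof -
      let ?I = "closed_segment a (a + s)"
      have inI: "\<bar>\<sigma> - a\<bar> < d" if "\<sigma> \<in> ?I" for \<sigma>
        using seg_le[OF that] hs by linarith
      have hv: "((\<lambda>\<sigma>. pd2 G (\<sigma>, \<tau>)) has_vector_derivative H (\<sigma>, \<tau>)) (at \<sigma> within ?I)"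
        if "\<sigma> \<in> ?I" for \<sigma>
      proof -
        have "(\<sigma>, \<tau>) \<in> S" using inR[OF inI[OF that] ht] by blast
        then have "((\<lambda>s. pd2 G (s, \<tau>)) has_vector_derivative H (\<sigma>, \<tau>)) (at \<sigma>)"
          using dH by fastforce
        then show ?thesis by (rule has_vector_derivative_at_within)
      qed
      have hb: "norm (H (\<sigma>, \<tau>) - H (a, \<tau>)) \<le> 2 * \<epsilon>" if "\<sigma> \<in> ?I" for \<sigma>
      proof -
        have "norm (H (\<sigma>, \<tau>) - H x) < \<epsilon>" using inR[OF inI[OF that] ht] by blast
        moreover have "norm (H (a, \<tau>) - H x) < \<epsilon>" using inR[of a \<tau>] ht d by simp
        ultimately show ?thesis using norm_triangle_ineq4[of "H (\<sigma>, \<tau>) - H x" "H (a, \<tau>) - H x"]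
          by simp
      qed
      have "norm (pd2 G (a + s, \<tau>) - pd2 G (a, \<tau>) - ((a + s) - a) *\<^sub>R H (a, \<tau>)) \<le> norm ((a + s) - a) * (2 * \<epsilon>)"
        by (rule vector_differentiable_bound_linearization[where S="?I" and f="\<lambda>\<sigma>. pd2 G (\<sigma>, \<tau>)"
              and f'="\<lambda>\<sigma>. H (\<sigma>, \<tau>)"]) (use hv hb in auto)
      then have 1: "norm (pd2 G (a + s, \<tau>) - pd2 G (a, \<tau>) - s *\<^sub>R H (a, \<tau>)) \<le> \<bar>s\<bar> * (2 * \<epsilon>)"
        by simp
      have "norm (H (a, \<tau>) - H x) < \<epsilon>" using inR[of a \<tau>] ht d by simp
      then have 2: "norm (s *\<^sub>R H (a, \<tau>) - s *\<^sub>R H x) \<le> \<bar>s\<bar> * \<epsilon>"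
        by (metis abs_ge_zero less_imp_le mult_left_mono norm_scaleR scaleR_diff_right)
      have "norm (pd2 G (a + s, \<tau>) - pd2 G (a, \<tau>) - s *\<^sub>R H x)
          \<le> norm (pd2 G (a + s, \<tau>) - pd2 G (a, \<tau>) - s *\<^sub>R H (a, \<tau>)) + norm (s *\<^sub>R H (a, \<tau>) - s *\<^sub>R H x)"
        by (rule order_trans[OF _ norm_triangle_ineq]) (simp add: algebra_simps)
      also have "\<dots> \<le> 3 * \<epsilon> * \<bar>s\<bar>" using 1 2 by (simp add: algebra_simps)
      finally show ?thesis .
    qed
    have stepB: "norm ((G (a + s, b + t) - G (a, b + t)) - (G (a + s, b) - G (a, b)) - (s * t) *\<^sub>R H x)
        \<le> 9 * \<epsilon> * \<bar>s\<bar> * \<bar>t\<bar>"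
      if hs: "\<bar>s\<bar> < d" and htt: "\<bar>t\<bar> < d" for s t
    proof -
      let ?J = "closed_segment b (b + t)"
      have inJ: "\<bar>\<tau> - b\<bar> < d" if "\<tau> \<in> ?J" for \<tau>
        using seg_le[OF that] htt by linarith
      have hv: "((\<lambda>\<tau>. G (a + s, \<tau>) - G (a, \<tau>)) has_vector_derivative (pd2 G (a + s, \<tau>) - pd2 G (a, \<tau>)))
          (at \<tau> within ?J)" if "\<tau> \<in> ?J" for \<tau>
      proof -
        have "(a + s, \<tau>) \<in> S" "(a, \<tau>) \<in> S"
          using inR[of "a + s" \<tau>] inR[of a \<tau>] inJ[OF that] hs d by auto
        then have g1: "G differentiable at (a + s, \<tau>)" and g2: "G differentiable at (a, \<tau>)"
          using dG by auto
        have "((\<lambda>\<tau>. G (a + s, \<tau>) - G (a, \<tau>)) has_vector_derivative (pd2 G (a + s, \<tau>) - pd2 G (a, \<tau>))) (at \<tau>)"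
          using has_vector_derivative_diff[OF pd2_hvd[OF g1, simplified] pd2_hvd[OF g2, simplified]] by simp
        then show ?thesis by (rule has_vector_derivative_at_within)
      qed
      have hb: "norm ((pd2 G (a + s, \<tau>) - pd2 G (a, \<tau>)) - (pd2 G (a + s, b) - pd2 G (a, b))) \<le> 6 * \<epsilon> * \<bar>s\<bar>"
        if "\<tau> \<in> ?J" for \<tau>
      proof -
        have "norm ((pd2 G (a + s, \<tau>) - pd2 G (a, \<tau>)) - (pd2 G (a + s, b) - pd2 G (a, b)))
          \<le> norm ((pd2 G (a + s, \<tau>) - pd2 G (a, \<tau>)) - s *\<^sub>R H x) + norm (s *\<^sub>R H x - (pd2 G (a + s, b) - pd2 G (a, b)))"
          by (rule tri)
        also have "\<dots> \<le> 3 * \<epsilon> * \<bar>s\<bar> + 3 * \<epsilon> * \<bar>s\<bar>"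
          using stepA[OF hs inJ[OF that]] stepA[OF hs, of b] d by (simp add: norm_minus_commute)
        finally show ?thesis by simp
      qed
      have "norm ((G (a + s, b + t) - G (a, b + t)) - (G (a + s, b) - G (a, b))
              - ((b + t) - b) *\<^sub>R (pd2 G (a + s, b) - pd2 G (a, b))) \<le> norm ((b + t) - b) * (6 * \<epsilon> * \<bar>s\<bar>)"
        by (rule vector_differentiable_bound_linearization[where S="?J" and f="\<lambda>\<tau>. G (a + s, \<tau>) - G (a, \<tau>)"
              and f'="\<lambda>\<tau>. pd2 G (a + s, \<tau>) - pd2 G (a, \<tau>)"]) (use hv hb in auto)
      then have 1: "norm ((G (a + s, b + t) - G (a, b + t)) - (G (a + s, b) - G (a, b))
              - t *\<^sub>R (pd2 G (a + s, b) - pd2 G (a, b))) \<le> \<bar>t\<bar> * (6 * \<epsilon> * \<bar>s\<bar>)" by simp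
      have "norm (t *\<^sub>R (pd2 G (a + s, b) - pd2 G (a, b)) - (s * t) *\<^sub>R H x)
          = \<bar>t\<bar> * norm ((pd2 G (a + s, b) - pd2 G (a, b)) - s *\<^sub>R H x)"
      proof -
        have "t *\<^sub>R (pd2 G (a + s, b) - pd2 G (a, b)) - (s * t) *\<^sub>R H x
            = t *\<^sub>R ((pd2 G (a + s, b) - pd2 G (a, b)) - s *\<^sub>R H x)"
          by (simp add: algebra_simps)
        then show ?thesis by simp
      qed
      also have "\<dots> \<le> \<bar>t\<bar> * (3 * \<epsilon> * \<bar>s\<bar>)"
        using stepA[OF hs, of b] d by (intro mult_left_mono) auto
      finally have 2: "norm (t *\<^sub>R (pd2 G (a + s, b) - pd2 G (a, b)) - (s * t) *\<^sub>R H x) \<le> \<bar>t\<bar> * (3 * \<epsilon> * \<bar>s\<bar>)" .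
      have "norm ((G (a + s, b + t) - G (a, b + t)) - (G (a + s, b) - G (a, b)) - (s * t) *\<^sub>R H x)
        \<le> norm ((G (a + s, b + t) - G (a, b + t)) - (G (a + s, b) - G (a, b))
              - t *\<^sub>R (pd2 G (a + s, b) - pd2 G (a, b))) + norm (t *\<^sub>R (pd2 G (a + s, b) - pd2 G (a, b)) - (s * t) *\<^sub>R H x)"
        by (rule order_trans[OF _ norm_triangle_ineq]) (simp add: algebra_simps)
      also have "\<dots> \<le> 9 * \<epsilon> * \<bar>s\<bar> * \<bar>t\<bar>" using 1 2 by (simp add: algebra_simps)
      finally show ?thesis .
    qed
    show ?thesis
    proof (intro exI[of _ d] conjI allI impI)
      show "d > 0" by (rule d)
      fix y assume hy: "norm (y - b) < d"
      define t where "t = y - b"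
      have ht: "\<bar>t\<bar> < d" using hy t_def by simp
      have yt: "y = b + t" using t_def by simp
      show "norm (pd1 G (a, y) - pd1 G (a, b) - (y - b) *\<^sub>R H x) \<le> e * norm (y - b)"
      proof (rule field_le_epsilon)
        fix e' :: real assume e': "0 < e'"
        have "(a, y) \<in> S" "(a, b) \<in> S" using inR[of a y] inR[of a b] ht d yt by auto
        then have Gy: "G differentiable at (a, y)" and Gb: "G differentiable at (a, b)" using dG by auto
        have "((\<lambda>\<sigma>. G (\<sigma>, y)) has_derivative (\<lambda>h. h *\<^sub>R pd1 G (a, y))) (at a)"
          using pd1_hvd[OF Gy] by (simp add: has_vector_derivative_def)
        then obtain d1 where d1: "d1 > 0" "\<forall>\<sigma>. norm (\<sigma> - a) < d1 \<longrightarrow>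
            norm (G (\<sigma>, y) - G (a, y) - (\<sigma> - a) *\<^sub>R pd1 G (a, y)) \<le> (e' / 2) * norm (\<sigma> - a)"
          unfolding has_derivative_at_alt using e' by (meson half_gt_zero)
        have "((\<lambda>\<sigma>. G (\<sigma>, b)) has_derivative (\<lambda>h. h *\<^sub>R pd1 G (a, b))) (at a)"
          using pd1_hvd[OF Gb] by (simp add: has_vector_derivative_def)
        then obtain d2 where d2: "d2 > 0" "\<forall>\<sigma>. norm (\<sigma> - a) < d2 \<longrightarrow>
            norm (G (\<sigma>, b) - G (a, b) - (\<sigma> - a) *\<^sub>R pd1 G (a, b)) \<le> (e' / 2) * norm (\<sigma> - a)"
          unfolding has_derivative_at_alt using e' by (meson half_gt_zero)
        define s where "s = min d (min d1 d2) / 2"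
        have s: "s > 0" "s < d" "s < d1" "s < d2" using d d1 d2 by (auto simp: s_def)
        have A1: "norm (G (a + s, y) - G (a, y) - s *\<^sub>R pd1 G (a, y)) \<le> (e' / 2) * s"
          using d1(2)[rule_format, of "a + s"] s by simp
        have A2: "norm (G (a + s, b) - G (a, b) - s *\<^sub>R pd1 G (a, b)) \<le> (e' / 2) * s"
          using d2(2)[rule_format, of "a + s"] s by simp
        have A3: "norm ((G (a + s, y) - G (a, y)) - (G (a + s, b) - G (a, b)) - (s * t) *\<^sub>R H x)
            \<le> 9 * \<epsilon> * s * \<bar>t\<bar>"
          using stepB[of s t] s ht yt by simp
        have eq: "s *\<^sub>R (pd1 G (a, y) - pd1 G (a, b) - t *\<^sub>R H x)
          = - (G (a + s, y) - G (a, y) - s *\<^sub>R pd1 G (a, y)) + (G (a + s, b) - G (a, b) - s *\<^sub>R pd1 G (a, b))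
            + ((G (a + s, y) - G (a, y)) - (G (a + s, b) - G (a, b)) - (s * t) *\<^sub>R H x)"
          by (simp add: algebra_simps)
        have "s * norm (pd1 G (a, y) - pd1 G (a, b) - t *\<^sub>R H x)
            = norm (s *\<^sub>R (pd1 G (a, y) - pd1 G (a, b) - t *\<^sub>R H x))" using s by simp
        also have "\<dots> \<le> norm (G (a + s, y) - G (a, y) - s *\<^sub>R pd1 G (a, y)) + norm (G (a + s, b) - G (a, b) - s *\<^sub>R pd1 G (a, b))
            + norm ((G (a + s, y) - G (a, y)) - (G (a + s, b) - G (a, b)) - (s * t) *\<^sub>R H x)"
          unfolding eq by (rule tri3)
        also have "\<dots> \<le> s * (e' + 9 * \<epsilon> * \<bar>t\<bar>)"
          using A1 A2 A3 by (simp add: algebra_simps)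
        finally have "norm (pd1 G (a, y) - pd1 G (a, b) - t *\<^sub>R H x) \<le> e' + 9 * \<epsilon> * \<bar>t\<bar>"
          using s by (simp add: mult_le_cancel_left_pos)
        then show "norm (pd1 G (a, y) - pd1 G (a, b) - (y - b) *\<^sub>R H x) \<le> e * norm (y - b) + e'"
          using t_def by (simp add: \<epsilon>_def)
      qed
    qed
  qed
  show ?thesis
    unfolding has_vector_derivative_def has_derivative_at_alt
    using main xab by (simp add: bounded_linear_scaleR_left)
qed


lemma pd1_lin3:
  assumes "f differentiable (at y)" "g differentiable (at y)" "h differentiable (at y)"
  shows "pd1 (\<lambda>x. a * f x + b * g x + c * h x) y = a * pd1 f y + b * pd1 g y + c * pd1 h y"
  unfolding pd1_def[of "\<lambda>x. a * f x + b * g x + c * h x"]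
  by (intro vector_derivative_at has_vector_derivative_add has_vector_derivative_mult_right pd1_hvd assms)

lemma pd2_lin3:
  assumes "f differentiable (at y)" "g differentiable (at y)" "h differentiable (at y)"
  shows "pd2 (\<lambda>x. a * f x + b * g x + c * h x) y = a * pd2 f y + b * pd2 g y + c * pd2 h y"
  unfolding pd2_def[of "\<lambda>x. a * f x + b * g x + c * h x"]
  by (intro vector_derivative_at has_vector_derivative_add has_vector_derivative_mult_right pd2_hvd assms)

lemma pd1_lin2:
  assumes "f differentiable (at y)" "g differentiable (at y)"
  shows "pd1 (\<lambda>x. a * f x + b * g x) y = a * pd1 f y + b * pd1 g y"
  unfolding pd1_def[of "\<lambda>x. a * f x + b * g x"]
  by (intro vector_derivative_at has_vector_derivative_add has_vector_derivative_mult_right pd1_hvd assms)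

lemma pd2_lin2:
  assumes "f differentiable (at y)" "g differentiable (at y)"
  shows "pd2 (\<lambda>x. a * f x + b * g x) y = a * pd2 f y + b * pd2 g y"
  unfolding pd2_def[of "\<lambda>x. a * f x + b * g x"]
  by (intro vector_derivative_at has_vector_derivative_add has_vector_derivative_mult_right pd2_hvd assms)

lemma sm_diff:
  assumes "open S" "smooth_on S u" "y \<in> S"
  shows "pdm i j u differentiable (at y)"
  using assms differentiable_on_eq_differentiable_at unfolding smooth_on_def by blast

lemma sm_cont:
  assumes "smooth_on S u"
  shows "continuous_on S (pdm i j u)"
  using assms differentiable_imp_continuous_on unfolding smooth_on_def by blast

lemma comm:
  assumes S: "open S" and sm: "smooth_on S u"
  shows "\<forall>k. \<forall>y\<in>S. pd2 (pdm j k u) y = pdm j (Suc k) u y"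
proof (induction j)
  case 0
  then show ?case by (simp add: pdm_def)
next
  case (Suc j)
  show ?case
  proof (intro allI ballI)
    fix k y assume y: "y \<in> S"
    let ?G = "pdm j k u"
    let ?H = "pdm (Suc j) (Suc k) u"
    have dG: "\<forall>y\<in>S. ?G differentiable (at y)" using sm_diff[OF S sm] by blast
    have dH: "\<forall>y\<in>S. ((\<lambda>s. pd2 ?G (s, snd y)) has_vector_derivative ?H y) (at (fst y))"
    proof
      fix z assume z: "z \<in> S"
      have "((\<lambda>t. pdm j (Suc k) u (t, snd z)) has_vector_derivative pd1 (pdm j (Suc k) u) z) (at (fst z))"
        by (rule pd1_hvd[OF sm_diff[OF S sm z]])
      then have h: "((\<lambda>t. pdm j (Suc k) u (t, snd z)) has_vector_derivative ?H z) (at (fst z))"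
        by (simp add: pdm_Suc1)
      show "((\<lambda>s. pd2 ?G (s, snd z)) has_vector_derivative ?H z) (at (fst z))"
        by (rule has_vector_derivative_transform_within_open[OF h open_slice1[OF S, of "snd z"]])
           (use z Suc.IH in auto)
    qed
    have cH: "continuous_on S ?H" by (rule sm_cont[OF sm])
    have "((\<lambda>t. pd1 ?G (fst y, t)) has_vector_derivative ?H y) (at (snd y))"
      by (rule schwarz[OF S y dG dH cH])
    then have "pd2 (pd1 ?G) y = ?H y" unfolding pd2_def by (rule vector_derivative_at)
    then show "pd2 (pdm (Suc j) k u) y = pdm (Suc j) (Suc k) u y" by (simp add: pdm_Suc1)
  qed
qed

lemma pd1_zero: "pd1 (\<lambda>_. 0) = (\<lambda>_. 0)"
  by (simp add: pd1_def fun_eq_iff)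

lemma pd2_zero: "pd2 (\<lambda>_. 0) = (\<lambda>_. 0)"
  by (simp add: pd2_def fun_eq_iff)

lemma pdm_zero: "pdm i j (\<lambda>_. 0) = (\<lambda>_. 0)"
proof -
  have a: "(pd2 ^^ j) (\<lambda>_. 0) = (\<lambda>_. 0)" by (induction j) (simp_all add: pd2_zero)
  have b: "(pd1 ^^ i) (\<lambda>_. 0) = (\<lambda>_. 0)" by (induction i) (simp_all add: pd1_zero)
  show ?thesis by (simp add: pdm_def a b)
qed

lemma helm:
  assumes S: "open S" and sm: "smooth_on S u"
    and eq: "\<forall>y\<in>S. pdm 2 0 u y + pdm 0 2 u y + c * u y = 0" and x: "x \<in> S"
  shows "pdm (i + 2) j u x + pdm i (j + 2) u x + c * pdm i j u x = 0"
proof -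
  define K where "K = (\<lambda>y. 1 * pdm 2 0 u y + 1 * pdm 0 2 u y + c * pdm 0 0 u y)"
  have dd: "\<And>i j y. y \<in> S \<Longrightarrow> pdm i j u differentiable (at y)" using sm_diff[OF S sm] by blast
  have c2: "\<And>i j y. y \<in> S \<Longrightarrow> pd2 (pdm i j u) y = pdm i (Suc j) u y" using comm[OF S sm] by blast
  have s2: "\<forall>y\<in>S. (pd2 ^^ j) K y = 1 * pdm 2 j u y + 1 * pdm 0 (j + 2) u y + c * pdm 0 j u y" for j
  proof (induction j)
    case 0
    then show ?case by (simp add: K_def numeral_2_eq_2)
  next
    case (Suc j)
    show ?case
    proof
      fix y assume y: "y \<in> S"
      have "(pd2 ^^ Suc j) K y = pd2 ((pd2 ^^ j) K) y" by simp
      also have "\<dots> = pd2 (\<lambda>y. 1 * pdm 2 j u y + 1 * pdm 0 (j + 2) u y + c * pdm 0 j u y) y"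
        by (rule pd2_local[OF S Suc.IH y])
      also have "\<dots> = 1 * pd2 (pdm 2 j u) y + 1 * pd2 (pdm 0 (j + 2) u) y + c * pd2 (pdm 0 j u) y"
        by (rule pd2_lin3) (use dd y in auto)
      also have "\<dots> = 1 * pdm 2 (Suc j) u y + 1 * pdm 0 (Suc j + 2) u y + c * pdm 0 (Suc j) u y"
        using c2[OF y] by simp
      finally show "(pd2 ^^ Suc j) K y = 1 * pdm 2 (Suc j) u y + 1 * pdm 0 (Suc j + 2) u y + c * pdm 0 (Suc j) u y" .
    qed
  qed
  have s1: "\<forall>y\<in>S. (pd1 ^^ i) ((pd2 ^^ j) K) y = 1 * pdm (i + 2) j u y + 1 * pdm i (j + 2) u y + c * pdm i j u y" for i
  proof (induction i)
    case 0
    then show ?case using s2 by (simp add: pdm_def numeral_2_eq_2)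
  next
    case (Suc i)
    show ?case
    proof
      fix y assume y: "y \<in> S"
      have "(pd1 ^^ Suc i) ((pd2 ^^ j) K) y = pd1 ((pd1 ^^ i) ((pd2 ^^ j) K)) y" by simp
      also have "\<dots> = pd1 (\<lambda>y. 1 * pdm (i + 2) j u y + 1 * pdm i (j + 2) u y + c * pdm i j u y) y"
        by (rule pd1_local[OF S Suc.IH y])
      also have "\<dots> = 1 * pd1 (pdm (i + 2) j u) y + 1 * pd1 (pdm i (j + 2) u) y + c * pd1 (pdm i j u) y"
        by (rule pd1_lin3) (use dd y in auto)
      also have "\<dots> = 1 * pdm (Suc i + 2) j u y + 1 * pdm (Suc i) (j + 2) u y + c * pdm (Suc i) j u y"
        by (simp add: pdm_Suc1)
      finally show "(pd1 ^^ Suc i) ((pd2 ^^ j) K) y = 1 * pdm (Suc i + 2) j u y + 1 * pdm (Suc i) (j + 2) u y + c * pdm (Suc i) j u y" .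
    qed
  qed
  have K0: "\<forall>y\<in>S. K y = (\<lambda>_. 0) y" using eq by (simp add: K_def pdm_00)
  have "pdm i j K x = pdm i j (\<lambda>_. 0) x" using pdm_local[OF S K0] x by blast
  then have "pdm i j K x = 0" by (simp add: pdm_zero)
  moreover have "pdm i j K x = 1 * pdm (i + 2) j u x + 1 * pdm i (j + 2) u x + c * pdm i j u x"
    using s1 x by (simp add: pdm_def)
  ultimately show ?thesis by simp
qed

fun Tc :: "complex \<Rightarrow> complex \<Rightarrow> nat \<Rightarrow> (nat \<Rightarrow> nat \<Rightarrow> complex) \<Rightarrow> complex" where
  "Tc p q 0 F = F 0 0"
| "Tc p q (Suc m) F = p * Tc p q m (\<lambda>i j. F (Suc i) j) + q * Tc p q m (\<lambda>i j. F i (Suc j))"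

lemma Tc_add: "Tc p q m (\<lambda>i j. F i j + G i j) = Tc p q m F + Tc p q m G"
  by (induction m arbitrary: F G) (simp_all add: algebra_simps)

lemma Tc_cmult: "Tc p q m (\<lambda>i j. c * F i j) = c * Tc p q m F"
  by (induction m arbitrary: F) (simp_all add: algebra_simps)

lemma Tc_Suc': "Tc p q (Suc m) F = Tc p q m (\<lambda>i j. p * F (Suc i) j + q * F i (Suc j))"
  by (simp add: Tc_add Tc_cmult)

lemma Tc_cong: "(\<forall>i j. i + j = m \<longrightarrow> F i j = G i j) \<Longrightarrow> Tc p q m F = Tc p q m G"
proof (induction m arbitrary: F G)
  case 0
  then show ?case by simp
next
  case (Suc m)
  have "Tc p q m (\<lambda>i j. F (Suc i) j) = Tc p q m (\<lambda>i j. G (Suc i) j)"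
    by (rule Suc.IH) (use Suc.prems in simp)
  moreover have "Tc p q m (\<lambda>i j. F i (Suc j)) = Tc p q m (\<lambda>i j. G i (Suc j))"
    by (rule Suc.IH) (use Suc.prems in simp)
  ultimately show ?case by simp
qed

lemma Tc_geom: "Tc p q m (\<lambda>i j. \<gamma> ^ j) = (p + q * \<gamma>) ^ m"
proof (induction m)
  case 0
  then show ?case by simp
next
  case (Suc m)
  have "Tc p q m (\<lambda>i j. \<gamma> ^ Suc j) = \<gamma> * Tc p q m (\<lambda>i j. \<gamma> ^ j)"
    using Tc_cmult[of p q m \<gamma> "\<lambda>i j. \<gamma> ^ j"] by simp
  then show ?case using Suc.IH by (simp add: algebra_simps)
qed

lemma Tc_cont:
  "(\<And>i j. continuous_on S (g i j)) \<Longrightarrow> continuous_on S (\<lambda>t. Tc p q m (\<lambda>i j. g i j t))"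
proof (induction m arbitrary: g)
  case 0
  then show ?case by simp
next
  case (Suc m)
  have "continuous_on S (\<lambda>t. Tc p q m (\<lambda>i j. g (Suc i) j t))" by (rule Suc.IH) (rule Suc.prems)
  moreover have "continuous_on S (\<lambda>t. Tc p q m (\<lambda>i j. g i (Suc j) t))" by (rule Suc.IH) (rule Suc.prems)
  ultimately show ?case by (simp add: continuous_intros)
qed

lemma De_lin2:
  assumes "f differentiable (at y)" "g differentiable (at y)"
  shows "De e (\<lambda>x. a * f x + b * g x) y = a * De e f y + b * De e g y"
  unfolding De_def using pd1_lin2[OF assms] pd2_lin2[OF assms] by (simp add: algebra_simps)

lemma line_zero:
  fixes F :: "nat \<Rightarrow> nat \<Rightarrow> real \<times> real \<Rightarrow> complex"
  assumes S: "open S" and h: "h > 0" and seg: "\<forall>t\<in>{0..h}. x0 + t *\<^sub>R e \<in> S"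
    and dF: "\<forall>i j. F i j differentiable_on S"
    and DF: "\<forall>i j. \<forall>y\<in>S. De e (F i j) y = of_real (fst e) * F (Suc i) j y + of_real (snd e) * F i (Suc j) y"
    and z: "\<forall>t\<in>{0<..<h}. F 0 0 (x0 + t *\<^sub>R e) = 0"
  shows "Tc (of_real (fst e)) (of_real (snd e)) m (\<lambda>i j. F i j x0) = 0"
proof -
  let ?p = "of_real (fst e) :: complex"
  let ?q = "of_real (snd e) :: complex"
  have inner: "\<forall>F. (\<forall>i j. F i j differentiable_on S)
     \<and> (\<forall>i j. \<forall>y\<in>S. De e (F i j) y = ?p * F (Suc i) j y + ?q * F i (Suc j) y)
     \<and> (\<forall>t\<in>{0<..<h}. F 0 0 (x0 + t *\<^sub>R e) = 0)
     \<longrightarrow> (\<forall>t\<in>{0<..<h}. Tc ?p ?q m (\<lambda>i j. F i j (x0 + t *\<^sub>R e)) = 0)" for m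
  proof (induction m)
    case 0
    then show ?case by simp
  next
    case (Suc m)
    show ?case
    proof (intro allI impI)
      fix F :: "nat \<Rightarrow> nat \<Rightarrow> real \<times> real \<Rightarrow> complex"
      assume H: "(\<forall>i j. F i j differentiable_on S)
     \<and> (\<forall>i j. \<forall>y\<in>S. De e (F i j) y = ?p * F (Suc i) j y + ?q * F i (Suc j) y)
     \<and> (\<forall>t\<in>{0<..<h}. F 0 0 (x0 + t *\<^sub>R e) = 0)"
      have dF: "\<And>i j y. y \<in> S \<Longrightarrow> F i j differentiable (at y)"
        using H S differentiable_on_eq_differentiable_at by blast
      define F' where "F' = (\<lambda>i j y. ?p * F (Suc i) j y + ?q * F i (Suc j) y)"
      have dF': "\<forall>i j. F' i j differentiable_on S"
        using H by (auto simp: F'_def intro!: differentiable_on_add differentiable_on_mult)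
      have DF': "\<forall>i j. \<forall>y\<in>S. De e (F' i j) y = ?p * F' (Suc i) j y + ?q * F' i (Suc j) y"
      proof (intro allI ballI)
        fix i j y assume y: "y \<in> S"
        have "De e (F' i j) y = ?p * De e (F (Suc i) j) y + ?q * De e (F i (Suc j)) y"
          unfolding F'_def by (rule De_lin2) (use dF y in auto)
        also have "\<dots> = ?p * F' (Suc i) j y + ?q * F' i (Suc j) y"
          using H y by (simp add: F'_def)
        finally show "De e (F' i j) y = ?p * F' (Suc i) j y + ?q * F' i (Suc j) y" .
      qed
      have z': "\<forall>t\<in>{0<..<h}. F' 0 0 (x0 + t *\<^sub>R e) = 0"
      proof
        fix t :: real assume t: "t \<in> {0<..<h}"
        then have tS: "x0 + t *\<^sub>R e \<in> S" using seg by auto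
        have d1: "((\<lambda>s. F 0 0 (x0 + s *\<^sub>R e)) has_vector_derivative De e (F 0 0) (x0 + t *\<^sub>R e)) (at t)"
          by (rule line_hvd) (rule dF[OF tS])
        have "((\<lambda>s. 0) has_vector_derivative 0) (at t)" by (rule has_vector_derivative_const)
        then have d2: "((\<lambda>s. F 0 0 (x0 + s *\<^sub>R e)) has_vector_derivative 0) (at t)"
          by (rule has_vector_derivative_transform_within_open[of _ _ _ "{0<..<h}"]) (use t H in auto)
        have "De e (F 0 0) (x0 + t *\<^sub>R e) = 0" by (rule vector_derivative_unique_at[OF d1 d2])
        then show "F' 0 0 (x0 + t *\<^sub>R e) = 0" using H tS by (simp add: F'_def)
      qed
      have "\<forall>t\<in>{0<..<h}. Tc ?p ?q m (\<lambda>i j. F' i j (x0 + t *\<^sub>R e)) = 0"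
        using Suc.IH dF' DF' z' by blast
      then show "\<forall>t\<in>{0<..<h}. Tc ?p ?q (Suc m) (\<lambda>i j. F i j (x0 + t *\<^sub>R e)) = 0"
        by (simp only: Tc_Suc' F'_def)
    qed
  qed
  have zz: "\<forall>t\<in>{0<..<h}. Tc ?p ?q m (\<lambda>i j. F i j (x0 + t *\<^sub>R e)) = 0"
    using inner dF DF z by blast
  have cont: "continuous_on {0..h} (\<lambda>t. Tc ?p ?q m (\<lambda>i j. F i j (x0 + t *\<^sub>R e)))"
  proof (rule Tc_cont)
    fix i j
    show "continuous_on {0..h} (\<lambda>t. F i j (x0 + t *\<^sub>R e))"
      by (rule continuous_on_compose2[OF differentiable_imp_continuous_on[OF dF[rule_format]]])
         (use seg in \<open>auto intro!: continuous_intros\<close>)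
  qed
  have "Tc ?p ?q m (\<lambda>i j. F i j (x0 + 0 *\<^sub>R e)) = 0"
    by (rule continuous_constant_on_closure[where S="{0<..<h}"]) (use cont zz h in auto)
  then show ?thesis by simp
qed



lemma harm:
  fixes c :: "nat \<Rightarrow> nat \<Rightarrow> complex"
  assumes H: "\<forall>i j. c (i + 2) j + c i (j + 2) + lam * c i j = 0"
    and low: "\<forall>i j. i + j < N \<longrightarrow> c i j = 0" and N: "N \<ge> 1"
  defines "A \<equiv> (c N 0 - \<i> * c (N - 1) 1) / 2" and "B \<equiv> (c N 0 + \<i> * c (N - 1) 1) / 2"
  shows "\<forall>j. j \<le> N \<longrightarrow> c (N - j) j = A * \<i> ^ j + B * (- \<i>) ^ j"
proof (intro allI)
  fix j
  show "j \<le> N \<longrightarrow> c (N - j) j = A * \<i> ^ j + B * (- \<i>) ^ j"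
  proof (induction j rule: less_induct)
    case (less j)
    show ?case
    proof (cases "j \<le> 1")
      case True
      then consider "j = 0" | "j = 1" by linarith
      then show ?thesis
      proof cases
        case 1
        then show ?thesis by (simp add: A_def B_def field_simps)
      next
        case 2
        then show ?thesis by (simp add: A_def B_def field_simps)
      qed
    next
      case False
      then obtain k where k: "j = k + 2" by (metis add.commute add_2_eq_Suc' le_add_diff_inverse not_less_eq_eq numeral_2_eq_2 one_add_one plus_1_eq_Suc)
      show ?thesis
      proof
        assume jN: "j \<le> N"
        have IH: "c (N - k) k = A * \<i> ^ k + B * (- \<i>) ^ k" using less k jN by simp
        have "c (N - j + 2) k + c (N - j) (k + 2) + lam * c (N - j) k = 0" using H by blast
        moreover have "c (N - j) k = 0" using low k jN by simp
        moreover have "N - j + 2 = N - k" using k jN by simp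
        ultimately have "c (N - j) j = - c (N - k) k" using k by (simp add: add_eq_0_iff)
        also have "\<dots> = A * \<i> ^ j + B * (- \<i>) ^ j" using IH k by (simp add: power_add)
        finally show "c (N - j) j = A * \<i> ^ j + B * (- \<i>) ^ j" .
      qed
    qed
  qed
qed

lemma bnd_rel:
  fixes c :: "nat \<Rightarrow> nat \<Rightarrow> complex"
  assumes low: "\<forall>i j. i + j < N \<longrightarrow> c i j = 0" and N: "N \<ge> 1"
    and form: "\<forall>j. j \<le> N \<longrightarrow> c (N - j) j = A * \<i> ^ j + B * (- \<i>) ^ j"
    and bd: "Tc (of_real (cos \<phi>)) (of_real (sin \<phi>)) (N - 1)
       (\<lambda>i j. of_real (- sin \<phi>) * c (Suc i) j + of_real (cos \<phi>) * c i (Suc j) + C * c i j) = 0"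
  shows "A * cis (real N * \<phi>) = B * cis (- (real N * \<phi>))"
proof -
  let ?p = "of_real (cos \<phi>) :: complex"
  let ?q = "of_real (sin \<phi>) :: complex"
  define K1 where "K1 = (of_real (- sin \<phi>) + \<i> * of_real (cos \<phi>)) * A"
  define K2 where "K2 = (of_real (- sin \<phi>) - \<i> * of_real (cos \<phi>)) * B"
  have "Tc ?p ?q (N - 1) (\<lambda>i j. of_real (- sin \<phi>) * c (Suc i) j + of_real (cos \<phi>) * c i (Suc j) + C * c i j)
      = Tc ?p ?q (N - 1) (\<lambda>i j. K1 * \<i> ^ j + K2 * (- \<i>) ^ j)"
  proof (rule Tc_cong, intro allI impI)
    fix i j assume ij: "i + j = N - 1"
    have "Suc i = N - j" "j \<le> N" using ij N by auto
    then have 1: "c (Suc i) j = A * \<i> ^ j + B * (- \<i>) ^ j"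
      using form[rule_format, of j] by simp
    have "i = N - Suc j" "Suc j \<le> N" using ij N by auto
    then have 2: "c i (Suc j) = A * \<i> ^ Suc j + B * (- \<i>) ^ Suc j"
      using form[rule_format, of "Suc j"] by simp
    have 3: "c i j = 0" using low ij N by simp
    show "of_real (- sin \<phi>) * c (Suc i) j + of_real (cos \<phi>) * c i (Suc j) + C * c i j = K1 * \<i> ^ j + K2 * (- \<i>) ^ j"
      unfolding 1 2 3 K1_def K2_def by (simp add: algebra_simps)
  qed
  also have "\<dots> = Tc ?p ?q (N - 1) (\<lambda>i j. K1 * \<i> ^ j) + Tc ?p ?q (N - 1) (\<lambda>i j. K2 * (- \<i>) ^ j)"
    by (rule Tc_add)
  also have "\<dots> = K1 * Tc ?p ?q (N - 1) (\<lambda>i j. \<i> ^ j) + K2 * Tc ?p ?q (N - 1) (\<lambda>i j. (- \<i>) ^ j)"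
    by (simp only: Tc_cmult)
  also have "\<dots> = K1 * (?p + ?q * \<i>) ^ (N - 1) + K2 * (?p + ?q * (- \<i>)) ^ (N - 1)"
    by (simp only: Tc_geom)
  finally have z: "K1 * (?p + ?q * \<i>) ^ (N - 1) + K2 * (?p + ?q * (- \<i>)) ^ (N - 1) = 0" using bd by simp
  have e1: "?p + ?q * \<i> = cis \<phi>" by (simp add: complex_eq_iff)
  have e2: "?p + ?q * (- \<i>) = cis (- \<phi>)" by (simp add: complex_eq_iff)
  have k1: "K1 = \<i> * cis \<phi> * A" by (simp add: K1_def complex_eq_iff)
  have k2: "K2 = - \<i> * cis (- \<phi>) * B" by (simp add: K2_def complex_eq_iff)
  have NS: "N = Suc (N - 1)" using N by simp
  have pN: "cis \<phi> ^ N = cis \<phi> * cis \<phi> ^ (N - 1)" using NS by (metis power_Suc)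
  have pN': "cis (- \<phi>) ^ N = cis (- \<phi>) * cis (- \<phi>) ^ (N - 1)" using NS by (metis power_Suc)
  have "\<i> * (A * cis \<phi> ^ N - B * cis (- \<phi>) ^ N)
     = K1 * (?p + ?q * \<i>) ^ (N - 1) + K2 * (?p + ?q * (- \<i>)) ^ (N - 1)"
    unfolding e1 e2 k1 k2 pN pN' by (simp add: algebra_simps)
  then have "\<i> * (A * cis \<phi> ^ N - B * cis (- \<phi>) ^ N) = 0" using z by simp
  then have "A * cis \<phi> ^ N = B * cis (- \<phi>) ^ N" by simp
  then show ?thesis by (simp add: Complex.DeMoivre)
qed

lemma alg:
  fixes c :: "nat \<Rightarrow> nat \<Rightarrow> complex" and C1 C2 :: complex
  assumes H: "\<forall>i j. c (i + 2) j + c i (j + 2) + lam * c i j = 0"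
    and B1: "\<forall>m. Tc (of_real (cos \<phi>1)) (of_real (sin \<phi>1)) m
       (\<lambda>i j. of_real (- sin \<phi>1) * c (Suc i) j + of_real (cos \<phi>1) * c i (Suc j) + C1 * c i j) = 0"
    and B2: "\<forall>m. Tc (of_real (cos \<phi>2)) (of_real (sin \<phi>2)) m
       (\<lambda>i j. of_real (- sin \<phi>2) * c (Suc i) j + of_real (cos \<phi>2) * c i (Suc j) + C2 * c i j) = 0"
    and phi: "\<phi>2 = \<phi>1 + \<alpha> * pi" and irr: "\<alpha> \<notin> \<rat>" and c00: "c 0 0 = 0"
  shows "c i j = 0"
proof -
  have "\<forall>i j. i + j = N \<longrightarrow> c i j = 0" for N
  proof (induction N rule: less_induct)
    case (less N)
    have low: "\<forall>i j. i + j < N \<longrightarrow> c i j = 0" using less by blast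
    show ?case
    proof (cases "N = 0")
      case True
      then show ?thesis using c00 by simp
    next
      case False
      then have N: "N \<ge> 1" by simp
      define A where "A = (c N 0 - \<i> * c (N - 1) 1) / 2"
      define B where "B = (c N 0 + \<i> * c (N - 1) 1) / 2"
      have form: "\<forall>j. j \<le> N \<longrightarrow> c (N - j) j = A * \<i> ^ j + B * (- \<i>) ^ j"
        using harm[OF H low N] unfolding A_def B_def .
      have r1: "A * cis (real N * \<phi>1) = B * cis (- (real N * \<phi>1))"
        by (rule bnd_rel[OF low N form B1[rule_format]])
      have r2: "A * cis (real N * \<phi>2) = B * cis (- (real N * \<phi>2))"
        by (rule bnd_rel[OF low N form B2[rule_format]])
      have q1: "B = A * cis (2 * (real N * \<phi>1))"
      proof -
        define x where "x = real N * \<phi>1"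
        have r': "A * cis x = B * cis (- x)" using r1 unfolding x_def .
        have c1: "cis (- x) * cis x = 1" by (subst cis_mult) simp
        have c2: "cis x * cis x = cis (2 * x)" by (subst cis_mult) simp
        have "B = B * (cis (- x) * cis x)" by (simp only: c1 mult_1_right)
        also have "\<dots> = (B * cis (- x)) * cis x" by (rule mult.assoc[symmetric])
        also have "\<dots> = (A * cis x) * cis x" by (simp only: r')
        also have "\<dots> = A * (cis x * cis x)" by (rule mult.assoc)
        also have "\<dots> = A * cis (2 * x)" by (simp only: c2)
        finally show ?thesis unfolding x_def .
      qed
      have q2: "B = A * cis (2 * (real N * \<phi>2))"
      proof -
        define x where "x = real N * \<phi>2"
        have r': "A * cis x = B * cis (- x)" using r2 unfolding x_def .
        have c1: "cis (- x) * cis x = 1" by (subst cis_mult) simp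
        have c2: "cis x * cis x = cis (2 * x)" by (subst cis_mult) simp
        have "B = B * (cis (- x) * cis x)" by (simp only: c1 mult_1_right)
        also have "\<dots> = (B * cis (- x)) * cis x" by (rule mult.assoc[symmetric])
        also have "\<dots> = (A * cis x) * cis x" by (simp only: r')
        also have "\<dots> = A * (cis x * cis x)" by (rule mult.assoc)
        also have "\<dots> = A * cis (2 * x)" by (simp only: c2)
        finally show ?thesis unfolding x_def .
      qed
      have A0: "A = 0"
      proof (rule ccontr)
        assume "A \<noteq> 0"
        then have "cis (2 * (real N * \<phi>2)) = cis (2 * (real N * \<phi>1))" using q1 q2 by simp
        then have "cis (2 * (real N * \<phi>2)) / cis (2 * (real N * \<phi>1)) = 1" by simp
        then have "cis (2 * (real N * \<phi>2) - 2 * (real N * \<phi>1)) = 1" by (simp add: cis_divide)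
        then have "exp (\<i> * complex_of_real (2 * (real N * \<phi>2) - 2 * (real N * \<phi>1))) = 1"
          by (simp add: cis_conv_exp)
        then obtain n :: int where "2 * (real N * \<phi>2) - 2 * (real N * \<phi>1) = of_int (2 * n) * pi"
          unfolding exp_eq_1 by auto
        then have "2 * pi * (real N * \<alpha>) = 2 * pi * of_int n" using phi by (simp add: algebra_simps)
        then have "real N * \<alpha> = of_int n" by simp
        then have "\<alpha> = of_int n / real N" using N by (simp add: field_simps)
        then have "\<alpha> \<in> \<rat>" by simp
        then show False using irr by simp
      qed
      have B0: "B = 0" using q1 A0 by simp
      show ?thesis
      proof (intro allI impI)
        fix i j assume "i + j = N"
        then have "c i j = c (N - j) j" "j \<le> N" by auto
        then show "c i j = 0" using form A0 B0 by simp
      qed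
    qed
  qed
  then show ?thesis by blast
qed

lemma line_cond:
  assumes S: "open S" and sm: "smooth_on S u" and h: "h > 0"
    and seg: "\<forall>t\<in>{0..h}. segment_pt x0 \<phi> t \<in> S"
    and bc: "\<forall>t\<in>{0..h}. dir_deriv u (normalv \<phi>) (segment_pt x0 \<phi> t) + C * u (segment_pt x0 \<phi> t) = 0"
  shows "\<forall>m. Tc (of_real (cos \<phi>)) (of_real (sin \<phi>)) m
     (\<lambda>i j. of_real (- sin \<phi>) * pdm (Suc i) j u x0 + of_real (cos \<phi>) * pdm i (Suc j) u x0 + C * pdm i j u x0) = 0"
proof
  fix m
  define e where "e = unitv \<phi>"
  define F where "F = (\<lambda>i j y. of_real (- sin \<phi>) * pdm (Suc i) j u y + of_real (cos \<phi>) * pdm i (Suc j) u y + C * pdm i j u y)"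
  have dd: "\<And>i j y. y \<in> S \<Longrightarrow> pdm i j u differentiable (at y)" using sm_diff[OF S sm] by blast
  have c2: "\<And>i j y. y \<in> S \<Longrightarrow> pd2 (pdm i j u) y = pdm i (Suc j) u y" using comm[OF S sm] by blast
  have seg': "\<forall>t\<in>{0..h}. x0 + t *\<^sub>R e \<in> S" using seg by (simp add: segment_pt_def e_def)
  have dF: "\<forall>i j. F i j differentiable_on S"
    using sm unfolding smooth_on_def F_def
    by (auto intro!: differentiable_on_add differentiable_on_mult)
  have DF: "\<forall>i j. \<forall>y\<in>S. De e (F i j) y = of_real (fst e) * F (Suc i) j y + of_real (snd e) * F i (Suc j) y"
  proof (intro allI ballI)
    fix i j y assume y: "y \<in> S"
    have p1: "pd1 (F i j) y = F (Suc i) j y"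
    proof -
      have d1: "\<And>i j. pd1 (pdm i j u) differentiable at y" using dd[OF y] by (metis pdm_Suc1)
      show ?thesis unfolding F_def by (subst pd1_lin3) (use dd y d1 in \<open>auto simp: pdm_Suc1\<close>)
    qed
    have p2: "pd2 (F i j) y = F i (Suc j) y"
      unfolding F_def by (subst pd2_lin3) (use dd y c2 in auto)
    show "De e (F i j) y = of_real (fst e) * F (Suc i) j y + of_real (snd e) * F i (Suc j) y"
      unfolding De_def p1 p2 ..
  qed
  have z: "\<forall>t\<in>{0<..<h}. F 0 0 (x0 + t *\<^sub>R e) = 0"
  proof
    fix t :: real assume "t \<in> {0<..<h}"
    then have "t \<in> {0..h}" by simp
    then have "dir_deriv u (normalv \<phi>) (segment_pt x0 \<phi> t) + C * u (segment_pt x0 \<phi> t) = 0" using bc by blast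
    then show "F 0 0 (x0 + t *\<^sub>R e) = 0"
      by (simp add: F_def dir_deriv_def normalv_def segment_pt_def e_def pdm_def)
  qed
  have "Tc (of_real (fst e)) (of_real (snd e)) m (\<lambda>i j. F i j x0) = 0"
    by (rule line_zero[OF S h seg' dF DF z])
  then show "Tc (of_real (cos \<phi>)) (of_real (sin \<phi>)) m
     (\<lambda>i j. of_real (- sin \<phi>) * pdm (Suc i) j u x0 + of_real (cos \<phi>) * pdm i (Suc j) u x0 + C * pdm i j u x0) = 0"
    by (simp add: F_def e_def unitv_def)
qed

theorem theorem4p3:
  fixes \<Omega> :: "(real \<times> real) set" and u :: "real \<times> real \<Rightarrow> complex"
    and lam h \<alpha> \<theta> :: real and x0 :: "real \<times> real" and C1 :: complex
  assumes "open \<Omega>"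
    and "lam > 0"
    and "real_analytic_on \<Omega> u"
    and "(\<lambda>x. (cmod (u x))\<^sup>2) integrable_on \<Omega>"
    and "\<forall>x\<in>\<Omega>. - laplacian u x = of_real lam * u x"
    and "x0 \<in> \<Omega>" and "h > 0"
    and "0 < \<alpha>" and "\<alpha> < 2" and "\<alpha> \<notin> \<rat>"
    and "\<forall>t\<in>{0..h}. segment_pt x0 \<theta> t \<in> \<Omega>"
    and "\<forall>t\<in>{0..h}. segment_pt x0 (\<theta> + \<alpha> * pi) t \<in> \<Omega>"
    and "\<forall>t\<in>{0..h}. dir_deriv u (normalv (\<theta> + \<alpha> * pi)) (segment_pt x0 (\<theta> + \<alpha> * pi) t) = 0"
    and "C1 \<noteq> 0"
    and "\<forall>t\<in>{0..h}. dir_deriv u (normalv \<theta>) (segment_pt x0 \<theta> t)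
                      + C1 * u (segment_pt x0 \<theta> t) = 0"
  shows "(u x0 \<noteq> 0 \<longrightarrow> Vani u x0 = 0) \<and> (u x0 = 0 \<longrightarrow> Vani u x0 = \<infinity>)"
proof -
  note S = assms(1)
  have sm: "smooth_on \<Omega> u" using assms(3) unfolding real_analytic_on_def by blast
  have x0: "x0 \<in> \<Omega>" by (rule assms(6))
  have h0: "hom_term_nonzero u x0 0 \<longleftrightarrow> u x0 \<noteq> 0"
    by (simp add: hom_term_nonzero_def pdm_def)
  have part1: "u x0 \<noteq> 0 \<longrightarrow> Vani u x0 = 0"
  proof
    assume "u x0 \<noteq> 0"
    then have "hom_term_nonzero u x0 0" using h0 by simp
    then have "(LEAST N. hom_term_nonzero u x0 N) = 0" by (simp add: Least_eq_0)
    then show "Vani u x0 = 0" using \<open>hom_term_nonzero u x0 0\<close> unfolding Vani_def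
      by (auto simp: zero_enat_def)
  qed
  have part2: "u x0 = 0 \<longrightarrow> Vani u x0 = \<infinity>"
  proof
    assume u0: "u x0 = 0"
    define c where "c = (\<lambda>i j. pdm i j u x0)"
    have eq: "\<forall>y\<in>\<Omega>. pdm 2 0 u y + pdm 0 2 u y + of_real lam * u y = 0"
    proof
      fix y assume "y \<in> \<Omega>"
      then have "- laplacian u y = of_real lam * u y" using assms(5) by blast
      then show "pdm 2 0 u y + pdm 0 2 u y + of_real lam * u y = 0"
        by (simp add: laplacian_def pdm_def numeral_2_eq_2 add_eq_0_iff)
    qed
    have H: "\<forall>i j. c (i + 2) j + c i (j + 2) + of_real lam * c i j = 0"
      unfolding c_def using helm[OF S sm eq x0] by blast
    have B1: "\<forall>m. Tc (of_real (cos \<theta>)) (of_real (sin \<theta>)) m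
       (\<lambda>i j. of_real (- sin \<theta>) * c (Suc i) j + of_real (cos \<theta>) * c i (Suc j) + C1 * c i j) = 0"
      unfolding c_def by (rule line_cond[OF S sm assms(7) assms(11) assms(15)])
    have bc2: "\<forall>t\<in>{0..h}. dir_deriv u (normalv (\<theta> + \<alpha> * pi)) (segment_pt x0 (\<theta> + \<alpha> * pi) t)
        + 0 * u (segment_pt x0 (\<theta> + \<alpha> * pi) t) = 0" using assms(13) by simp
    have B2: "\<forall>m. Tc (of_real (cos (\<theta> + \<alpha> * pi))) (of_real (sin (\<theta> + \<alpha> * pi))) m
       (\<lambda>i j. of_real (- sin (\<theta> + \<alpha> * pi)) * c (Suc i) j + of_real (cos (\<theta> + \<alpha> * pi)) * c i (Suc j) + 0 * c i j) = 0"
      unfolding c_def by (rule line_cond[OF S sm assms(7) assms(12) bc2])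
    have c00: "c 0 0 = 0" using u0 by (simp add: c_def pdm_def)
    have all0: "\<And>i j. c i j = 0"
      by (rule alg[OF H B1 B2 refl assms(10) c00])
    have "\<not> hom_term_nonzero u x0 N" for N
      using all0 by (simp add: hom_term_nonzero_def c_def)
    then show "Vani u x0 = \<infinity>" unfolding Vani_def by simp
  qed
  show ?thesis using part1 part2 by blast
qed


end
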